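(* Let $\hat A\in\mathbb{R}^{\hat n\times\hat n}$ and $\check A\in\mathbb{R}^{\check n\times\check n}$ be self-similarities of generic cut-and-project schemes $\hat\Lambda=(\hat{\mathcal{L}}\subset\mathbb{R}^{\hat s},\mathbb{R}^{\hat n})$ and $\check\Lambda=(\check{\mathcal{L}}\subset\mathbb{R}^{\check s},\mathbb{R}^{\check n})$, respectively. Then $A=\begin{pmatrix}\hat A&O\\O&\check A\end{pmatrix}$ is a self-similarity of the generic cut-and-project scheme $\Lambda=\hat\Lambda\oplus\check\Lambda$.
   Context: A lattice $\mathcal{L}\subset\mathbb{R}^s$ is $\{L\mathbf{r}:\mathbf{r}\in\mathbb{Z}^s\}$ for a non-singular $L\in\mathbb{R}^{s\times s}$ (an associated matrix). For $1\le n<s$ the scheme $(\mathcal{L}\subset\mathbb{R}^s,\mathbb{R}^n)$ has projections $\pi_\parallel(\mathbf{x})=(x_1,\dots,x_n)^\top$, $\pi_\perp(\mathbf{x})=(x_{n+1},\dots,x_s)^\top$; it is generic if $\pi_\parallel|_{\mathcal{L}}$, $\pi_\perp|_{\mathcal{L}}$ are injective and $\pi_\perp(\mathcal{L})$ is dense in $\mathbb{R}^{s-n}$. $A$ is a self-similarity of a generic scheme with associated matrix $L$ if $A\pi_\parallel(\mathcal{L})\subset\pi_\parallel(\mathcal{L})$ and there exist $C\in\mathbb{Z}^{s\times s}$, $B\in\mathbb{R}^{(s-n)\times(s-n)}$ with $\begin{pmatrix}A&O\\O&B\end{pmatrix}L=LC$. The direct sum $\hat\Lambda\oplus\check\Lambda$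 of schemes with associated matrices $\hat L,\check L$ is the scheme $(\mathcal{L}\subset\mathbb{R}^{\hat s+\check s},\mathbb{R}^{\hat n+\check n})$ whose lattice has associated matrix $L=P\begin{pmatrix}\hat L&O\\O&\check L\end{pmatrix}$, where $P=\begin{pmatrix}I_{\hat n}&O&O&O\\O&O&I_{\hat s-\hat n}&O\\O&I_{\check n}&O&O\\O&O&O&I_{\check s-\check n}\end{pmatrix}$. *)

theory Defs
  imports "Jordan_Normal_Form.Matrix" "Jordan_Normal_Form.Determinant"
begin

text \<open>Cut-and-project schemes are represented by (s, n, L): ambient dimension s,
 physical dimension n, and an associated matrix L (s x s, non-singular).\<close>

definition lattice :: "real mat \<Rightarrow> real vec set" where
  "lattice L = {L *\<^sub>v map_vec real_of_int r | r. r \<in> carrier_vec (dim_col L)}"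

definition pi_par :: "nat \<Rightarrow> real vec \<Rightarrow> real vec" where
  "pi_par n x = vec n (\<lambda>i. x $ i)"

definition pi_perp :: "nat \<Rightarrow> nat \<Rightarrow> real vec \<Rightarrow> real vec" where
  "pi_perp s n x = vec (s - n) (\<lambda>i. x $ (n + i))"

text \<open>Density of a set of vectors in R^m (Euclidean topology, equivalently sup-norm).\<close>
definition dense_in_Rm :: "nat \<Rightarrow> real vec set \<Rightarrow> bool" where
  "dense_in_Rm m S \<longleftrightarrow> (\<forall>y \<in> carrier_vec m. \<forall>e > 0. \<exists>x \<in> S.
       \<forall>i < m. \<bar>x $ i - y $ i\<bar> < e)"

definition generic_scheme :: "nat \<Rightarrow> nat \<Rightarrow> real mat \<Rightarrow> bool" where
  "generic_scheme s n L \<longleftrightarrow>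
     1 \<le> n \<and> n < s \<and> L \<in> carrier_mat s s \<and> det L \<noteq> 0 \<and>
     inj_on (pi_par n) (lattice L) \<and> inj_on (pi_perp s n) (lattice L) \<and>
     dense_in_Rm (s - n) (pi_perp s n ` lattice L)"

definition integer_mat :: "real mat \<Rightarrow> bool" where
  "integer_mat C \<longleftrightarrow> (\<forall>i < dim_row C. \<forall>j < dim_col C. C $$ (i, j) \<in> \<int>)"

definition self_similarity :: "nat \<Rightarrow> nat \<Rightarrow> real mat \<Rightarrow> real mat \<Rightarrow> bool" where
  "self_similarity s n L A \<longleftrightarrow>
     generic_scheme s n L \<and> A \<in> carrier_mat n n \<and>
     (\<lambda>x. A *\<^sub>v x) ` (pi_par n ` lattice L) \<subseteq> pi_par n ` lattice L \<and>
     (\<exists>C B. C \<in> carrier_mat s s \<and> integer_mat C \<and> B \<in> carrier_mat (s - n) (s - n) \<and>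
        four_block_mat A (0\<^sub>m n (s - n)) (0\<^sub>m (s - n) n) B * L = L * C)"

text \<open>The permutation matrix P of the direct sum, written blockwise with column blocks
 of sizes nh, sh-nh, nc, sc-nc and row blocks of sizes nh, nc, sh-nh, sc-nc.\<close>
definition dsum_perm :: "nat \<Rightarrow> nat \<Rightarrow> nat \<Rightarrow> nat \<Rightarrow> real mat" where
  "dsum_perm sh nh sc nc =
     four_block_mat
       (four_block_mat (1\<^sub>m nh) (0\<^sub>m nh (sh - nh)) (0\<^sub>m nc nh) (0\<^sub>m nc (sh - nh)))
       (four_block_mat (0\<^sub>m nh nc) (0\<^sub>m nh (sc - nc)) (1\<^sub>m nc) (0\<^sub>m nc (sc - nc)))
       (four_block_mat (0\<^sub>m (sh - nh) nh) (1\<^sub>m (sh - nh)) (0\<^sub>m (sc - nc) nh) (0\<^sub>m (sc - nc) (sh - nh)))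
       (four_block_mat (0\<^sub>m (sh - nh) nc) (0\<^sub>m (sh - nh) (sc - nc)) (0\<^sub>m (sc - nc) nc) (1\<^sub>m (sc - nc)))"

definition dsum_mat :: "nat \<Rightarrow> nat \<Rightarrow> real mat \<Rightarrow> nat \<Rightarrow> nat \<Rightarrow> real mat \<Rightarrow> real mat" where
  "dsum_mat sh nh Lh sc nc Lc =
     dsum_perm sh nh sc nc * four_block_mat Lh (0\<^sub>m sh sc) (0\<^sub>m sc sh) Lc"

end

theory Submission
  imports Defs
begin

lemma pi_par_carrier[simp]: "pi_par n u \<in> carrier_vec n"
  unfolding pi_par_def by simp
lemma pi_perp_carrier[simp]: "pi_perp s n u \<in> carrier_vec (s - n)"
  unfolding pi_perp_def by simp

lemma dim_pi_par[simp]: "dim_vec (pi_par n u) = n"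
  unfolding pi_par_def by simp
lemma dim_pi_perp[simp]: "dim_vec (pi_perp s n u) = s - n"
  unfolding pi_perp_def by simp

lemma pi_par_app: "a \<in> carrier_vec n \<Longrightarrow> pi_par n (a @\<^sub>v b) = a"
  unfolding pi_par_def by (intro eq_vecI) auto

lemma pi_perp_app: "a \<in> carrier_vec n \<Longrightarrow> b \<in> carrier_vec (s - n) \<Longrightarrow> n \<le> s \<Longrightarrow>
   pi_perp s n (a @\<^sub>v b) = b"
  unfolding pi_perp_def by (intro eq_vecI) auto

lemma split_vec: "u \<in> carrier_vec s \<Longrightarrow> n \<le> s \<Longrightarrow> pi_par n u @\<^sub>v pi_perp s n u = u"
  unfolding pi_par_def pi_perp_def by (intro eq_vecI) auto

lemma split_vec_eq: "u \<in> carrier_vec s \<Longrightarrow> u' \<in> carrier_vec s \<Longrightarrow> n \<le> s \<Longrightarrow>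
  pi_par n u = pi_par n u' \<Longrightarrow> pi_perp s n u = pi_perp s n u' \<Longrightarrow> u = u'"
  by (metis split_vec)

lemma mat_eq_vec:
  fixes M N :: "real mat"
  assumes "M \<in> carrier_mat n m" "N \<in> carrier_mat n m"
    "\<And>x. x \<in> carrier_vec m \<Longrightarrow> M *\<^sub>v x = N *\<^sub>v x"
  shows "M = N"
proof -
  have *: "M $$ (i,j) = N $$ (i,j)" if ij: "i < n" "j < m" for i j
  proof -
    have "M $$ (i,j) = (M *\<^sub>v unit_vec m j) $ i"
      using assms(1) ij by (auto simp: carrier_matD)
    also have "\<dots> = (N *\<^sub>v unit_vec m j) $ i" by (simp only: assms(3)[OF unit_vec_carrier])
    also have "\<dots> = N $$ (i,j)" using assms(2) ij by (auto simp: carrier_matD)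
    finally show ?thesis .
  qed
  show ?thesis by (rule eq_matI) (use * assms in auto)
qed

lemma perm_mult:
  assumes "nh \<le> sh" "nc \<le> sc" "a \<in> carrier_vec nh" "b \<in> carrier_vec (sh - nh)"
    "c \<in> carrier_vec nc" "d \<in> carrier_vec (sc - nc)"
  shows "dsum_perm sh nh sc nc *\<^sub>v ((a @\<^sub>v b) @\<^sub>v (c @\<^sub>v d)) = (a @\<^sub>v c) @\<^sub>v (b @\<^sub>v d)"
proof -
  have 1: "four_block_mat (1\<^sub>m nh) (0\<^sub>m nh (sh - nh)) (0\<^sub>m nc nh) (0\<^sub>m nc (sh - nh)) *\<^sub>v (a @\<^sub>v b)
     = a @\<^sub>v 0\<^sub>v nc"
    using assms by (subst four_block_mat_mult_vec[of _ nh nh _ "sh-nh" _ nc]) auto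
  have 2: "four_block_mat (0\<^sub>m nh nc) (0\<^sub>m nh (sc - nc)) (1\<^sub>m nc) (0\<^sub>m nc (sc - nc)) *\<^sub>v (c @\<^sub>v d)
     = 0\<^sub>v nh @\<^sub>v c"
    using assms by (subst four_block_mat_mult_vec[of _ nh nc _ "sc-nc" _ nc]) auto
  have 3: "four_block_mat (0\<^sub>m (sh - nh) nh) (1\<^sub>m (sh - nh)) (0\<^sub>m (sc - nc) nh) (0\<^sub>m (sc - nc) (sh - nh)) *\<^sub>v (a @\<^sub>v b)
     = b @\<^sub>v 0\<^sub>v (sc - nc)"
    using assms by (subst four_block_mat_mult_vec[of _ "sh-nh" nh _ "sh-nh" _ "sc-nc"]) auto
  have 4: "four_block_mat (0\<^sub>m (sh - nh) nc) (0\<^sub>m (sh - nh) (sc - nc)) (0\<^sub>m (sc - nc) nc) (1\<^sub>m (sc - nc)) *\<^sub>v (c @\<^sub>v d)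
     = 0\<^sub>v (sh - nh) @\<^sub>v d"
    using assms by (subst four_block_mat_mult_vec[of _ "sh-nh" nc _ "sc-nc" _ "sc-nc"]) auto
  have ab: "a @\<^sub>v b \<in> carrier_vec (nh + (sh-nh))" "c @\<^sub>v d \<in> carrier_vec (nc + (sc-nc))"
    by (rule append_carrier_vec[OF assms(3,4)], rule append_carrier_vec[OF assms(5,6)])
  have ab2: "a @\<^sub>v b \<in> carrier_vec sh" "c @\<^sub>v d \<in> carrier_vec sc"
  proof -
    have "nh + (sh-nh) = sh" "nc + (sc - nc) = sc" using assms by auto
    thus "a @\<^sub>v b \<in> carrier_vec sh" "c @\<^sub>v d \<in> carrier_vec sc" using ab by metis+
  qed
  show ?thesis
    unfolding dsum_perm_def
    apply (subst four_block_mat_mult_vec[of _ "nh+nc" "nh + (sh-nh)" _ "nc + (sc-nc)" _ "(sh-nh)+(sc-nc)"])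
    apply (rule four_block_carrier_mat; simp)+
    apply (rule ab)+
    unfolding 1 2 3 4 using assms ab2
    by (simp add: append_vec_add[of a nh "0\<^sub>v nh" "0\<^sub>v nc" nc c]
       append_vec_add[of b "sh-nh" "0\<^sub>v (sh-nh)" "0\<^sub>v (sc-nc)" "sc-nc" d])
qed

definition cmb :: "nat \<Rightarrow> nat \<Rightarrow> nat \<Rightarrow> nat \<Rightarrow> real vec \<Rightarrow> real vec \<Rightarrow> real vec" where
  "cmb sh nh sc nc u v = (pi_par nh u @\<^sub>v pi_par nc v) @\<^sub>v (pi_perp sh nh u @\<^sub>v pi_perp sc nc v)"

lemma cmb_carrier: "nh \<le> sh \<Longrightarrow> nc \<le> sc \<Longrightarrow> cmb sh nh sc nc u v \<in> carrier_vec (sh + sc)"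
proof -
  assume a: "nh \<le> sh" "nc \<le> sc"
  have "cmb sh nh sc nc u v \<in> carrier_vec ((nh + nc) + ((sh - nh) + (sc - nc)))"
    unfolding cmb_def by (intro append_carrier_vec pi_par_carrier pi_perp_carrier)
  moreover have "(nh + nc) + ((sh - nh) + (sc - nc)) = sh + sc" using a by auto
  ultimately show ?thesis by metis
qed

lemma cmb_app:
  assumes "nh \<le> sh" "nc \<le> sc" "a \<in> carrier_vec nh" "b \<in> carrier_vec (sh - nh)"
    "c \<in> carrier_vec nc" "d \<in> carrier_vec (sc - nc)"
  shows "cmb sh nh sc nc (a @\<^sub>v b) (c @\<^sub>v d) = (a @\<^sub>v c) @\<^sub>v (b @\<^sub>v d)"
  unfolding cmb_def using assms by (simp add: pi_par_app pi_perp_app)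

lemma cmb_par: "pi_par (nh + nc) (cmb sh nh sc nc u v) = pi_par nh u @\<^sub>v pi_par nc v"
  unfolding cmb_def by (rule pi_par_app) auto

lemma cmb_perp: assumes "nh \<le> sh" "nc \<le> sc"
  shows "pi_perp (sh + sc) (nh + nc) (cmb sh nh sc nc u v) = pi_perp sh nh u @\<^sub>v pi_perp sc nc v"
proof -
  have e: "(sh - nh) + (sc - nc) = (sh + sc) - (nh + nc)" using assms by auto
  have "pi_perp sh nh u @\<^sub>v pi_perp sc nc v \<in> carrier_vec ((sh + sc) - (nh + nc))"
    unfolding e[symmetric] by auto
  then show ?thesis unfolding cmb_def using assms by (intro pi_perp_app) auto
qed

lemma cmb_inj:
  assumes "nh \<le> sh" "nc \<le> sc" "u \<in> carrier_vec sh" "u' \<in> carrier_vec sh"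
    "v \<in> carrier_vec sc" "v' \<in> carrier_vec sc" "cmb sh nh sc nc u v = cmb sh nh sc nc u' v'"
  shows "u = u' \<and> v = v'"
proof -
  have "pi_par nh u @\<^sub>v pi_par nc v = pi_par nh u' @\<^sub>v pi_par nc v'
     \<and> pi_perp sh nh u @\<^sub>v pi_perp sc nc v = pi_perp sh nh u' @\<^sub>v pi_perp sc nc v'"
    using assms(7) unfolding cmb_def
    by (subst (asm) append_vec_eq[of _ "nh+nc"]) auto
  then have "pi_par nh u = pi_par nh u'" "pi_par nc v = pi_par nc v'"
     "pi_perp sh nh u = pi_perp sh nh u'" "pi_perp sc nc v = pi_perp sc nc v'"
    by (auto simp: append_vec_eq[OF pi_par_carrier pi_par_carrier]
          append_vec_eq[OF pi_perp_carrier pi_perp_carrier])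
  then show ?thesis using assms split_vec_eq by metis
qed

lemma perm_carrier: "nh \<le> sh \<Longrightarrow> nc \<le> sc \<Longrightarrow> dsum_perm sh nh sc nc \<in> carrier_mat (sh + sc) (sh + sc)"
proof -
  assume a: "nh \<le> sh" "nc \<le> sc"
  have "dsum_perm sh nh sc nc \<in> carrier_mat ((nh + nc) + ((sh - nh) + (sc - nc))) ((nh + (sh - nh)) + (nc + (sc - nc)))"
    unfolding dsum_perm_def
    by (intro four_block_carrier_mat) auto
  moreover have "(nh + nc) + ((sh - nh) + (sc - nc)) = sh + sc" "(nh + (sh - nh)) + (nc + (sc - nc)) = sh + sc"
    using a by auto
  ultimately show ?thesis by metis
qed

lemma dsum_carrier: "Lh \<in> carrier_mat sh sh \<Longrightarrow> Lc \<in> carrier_mat sc sc \<Longrightarrow> nh \<le> sh \<Longrightarrow> nc \<le> sc \<Longrightarrow>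
   dsum_mat sh nh Lh sc nc Lc \<in> carrier_mat (sh + sc) (sh + sc)"
  unfolding dsum_mat_def using perm_carrier by (intro mult_carrier_mat) auto

lemma dsum_mult:
  assumes "Lh \<in> carrier_mat sh sh" "Lc \<in> carrier_mat sc sc" "nh \<le> sh" "nc \<le> sc"
    "x \<in> carrier_vec (sh + sc)"
  shows "dsum_mat sh nh Lh sc nc Lc *\<^sub>v x = cmb sh nh sc nc (Lh *\<^sub>v vec_first x sh) (Lc *\<^sub>v vec_last x sc)"
proof -
  let ?u = "Lh *\<^sub>v vec_first x sh" and ?v = "Lc *\<^sub>v vec_last x sc"
  have D: "four_block_mat Lh (0\<^sub>m sh sc) (0\<^sub>m sc sh) Lc *\<^sub>v x = ?u @\<^sub>v ?v"
    using assms mult_mat_vec_split[OF assms(1,2) vec_first_carrier vec_last_carrier, of x x]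
    by simp
  have u: "?u = pi_par nh ?u @\<^sub>v pi_perp sh nh ?u" using assms by (simp add: split_vec)
  have v: "?v = pi_par nc ?v @\<^sub>v pi_perp sc nc ?v" using assms by (simp add: split_vec)
  have "dsum_mat sh nh Lh sc nc Lc *\<^sub>v x = dsum_perm sh nh sc nc *\<^sub>v (?u @\<^sub>v ?v)"
  proof -
    have P: "dsum_perm sh nh sc nc \<in> carrier_mat (sh + sc) (sh + sc)" using perm_carrier assms by auto
    have Q: "four_block_mat Lh (0\<^sub>m sh sc) (0\<^sub>m sc sh) Lc \<in> carrier_mat (sh + sc) (sh + sc)"
      using assms by auto
    show ?thesis unfolding dsum_mat_def D[symmetric] by (rule assoc_mult_mat_vec[OF P Q assms(5)])
  qed
  also have "\<dots> = cmb sh nh sc nc ?u ?v"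
    apply (subst u, subst v) unfolding cmb_def using assms by (intro perm_mult) auto
  finally show ?thesis .
qed

lemma vec_first_app: "a \<in> carrier_vec n \<Longrightarrow> vec_first (a @\<^sub>v b) n = a"
  unfolding vec_first_def by (intro eq_vecI) auto

lemma vec_last_app: "b \<in> carrier_vec m \<Longrightarrow> vec_last (a @\<^sub>v b) m = b"
  unfolding vec_last_def by (intro eq_vecI) auto

lemma map_vec_app: "map_vec f (a @\<^sub>v b) = map_vec f a @\<^sub>v map_vec f b"
  by (intro eq_vecI) auto

lemma vec_first_map: "n \<le> dim_vec r \<Longrightarrow> vec_first (map_vec f r) n = map_vec f (vec_first r n)"
  unfolding vec_first_def by (intro eq_vecI) auto

lemma vec_last_map: "n \<le> dim_vec r \<Longrightarrow> vec_last (map_vec f r) n = map_vec f (vec_last r n)"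
  unfolding vec_last_def by (intro eq_vecI) auto

lemma lattice_carrier: "L \<in> carrier_mat s s \<Longrightarrow> x \<in> lattice L \<Longrightarrow> x \<in> carrier_vec s"
  unfolding lattice_def by auto

lemma lattice_dsum:
  assumes "Lh \<in> carrier_mat sh sh" "Lc \<in> carrier_mat sc sc" "nh \<le> sh" "nc \<le> sc"
  shows "lattice (dsum_mat sh nh Lh sc nc Lc) = {cmb sh nh sc nc u v | u v. u \<in> lattice Lh \<and> v \<in> lattice Lc}"
proof (rule subset_antisym; rule subsetI)
  fix x assume "x \<in> lattice (dsum_mat sh nh Lh sc nc Lc)"
  then obtain r where r: "r \<in> carrier_vec (sh + sc)" and x: "x = dsum_mat sh nh Lh sc nc Lc *\<^sub>v map_vec real_of_int r"
    unfolding lattice_def using dsum_carrier[OF assms] by auto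
  have "x = cmb sh nh sc nc (Lh *\<^sub>v map_vec real_of_int (vec_first r sh)) (Lc *\<^sub>v map_vec real_of_int (vec_last r sc))"
    unfolding x using r assms by (subst dsum_mult) (auto simp: vec_first_map vec_last_map)
  moreover have "Lh *\<^sub>v map_vec real_of_int (vec_first r sh) \<in> lattice Lh"
    unfolding lattice_def using assms(1) by auto
  moreover have "Lc *\<^sub>v map_vec real_of_int (vec_last r sc) \<in> lattice Lc"
    unfolding lattice_def using assms(2) by auto
  ultimately show "x \<in> {cmb sh nh sc nc u v | u v. u \<in> lattice Lh \<and> v \<in> lattice Lc}" by blast
next
  fix x assume "x \<in> {cmb sh nh sc nc u v | u v. u \<in> lattice Lh \<and> v \<in> lattice Lc}"
  then obtain r1 r2 where r1: "r1 \<in> carrier_vec sh" and r2: "r2 \<in> carrier_vec sc"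
    and x: "x = cmb sh nh sc nc (Lh *\<^sub>v map_vec real_of_int r1) (Lc *\<^sub>v map_vec real_of_int r2)"
    unfolding lattice_def using assms(1,2) by auto
  let ?r = "r1 @\<^sub>v r2"
  have rc: "map_vec real_of_int ?r \<in> carrier_vec (sh + sc)" using r1 r2 by auto
  have "dsum_mat sh nh Lh sc nc Lc *\<^sub>v map_vec real_of_int ?r = x"
    unfolding x using r1 r2 assms rc
    by (subst dsum_mult) (auto simp: map_vec_app vec_first_app vec_last_app)
  moreover have "?r \<in> carrier_vec (dim_col (dsum_mat sh nh Lh sc nc Lc))"
    using dsum_carrier[OF assms] r1 r2 by auto
  ultimately show "x \<in> lattice (dsum_mat sh nh Lh sc nc Lc)" unfolding lattice_def by blast
qed

lemma zero_app: "0\<^sub>v a @\<^sub>v 0\<^sub>v b = (0\<^sub>v (a + b) :: real vec)"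
  by (intro eq_vecI) auto

lemma pi_par_zero: "pi_par n (0\<^sub>v s) = (0\<^sub>v n :: real vec)" if "n \<le> s"
  unfolding pi_par_def using that by (intro eq_vecI) auto

lemma pi_perp_zero: "pi_perp s n (0\<^sub>v s) = (0\<^sub>v (s - n) :: real vec)"
  unfolding pi_perp_def by (intro eq_vecI) auto

lemma cmb_zero: assumes "nh \<le> sh" "nc \<le> sc"
  shows "cmb sh nh sc nc (0\<^sub>v sh) (0\<^sub>v sc) = 0\<^sub>v (sh + sc)"
proof -
  have "cmb sh nh sc nc (0\<^sub>v sh) (0\<^sub>v sc) = 0\<^sub>v ((nh + nc) + ((sh - nh) + (sc - nc)))"
    unfolding cmb_def using assms by (simp add: pi_par_zero pi_perp_zero zero_app)
  moreover have "(nh + nc) + ((sh - nh) + (sc - nc)) = sh + sc" using assms by auto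
  ultimately show ?thesis by metis
qed

lemma blk:
  fixes Lh Ch Ah Bh :: "real mat"
  assumes "Lh \<in> carrier_mat s s" "Ch \<in> carrier_mat s s" "Ah \<in> carrier_mat n n"
    "Bh \<in> carrier_mat (s - n) (s - n)" "n \<le> s"
    "four_block_mat Ah (0\<^sub>m n (s - n)) (0\<^sub>m (s - n) n) Bh * Lh = Lh * Ch" "x \<in> carrier_vec s"
  shows "Lh *\<^sub>v (Ch *\<^sub>v x) = Ah *\<^sub>v pi_par n (Lh *\<^sub>v x) @\<^sub>v Bh *\<^sub>v pi_perp s n (Lh *\<^sub>v x)"
proof -
  let ?M = "four_block_mat Ah (0\<^sub>m n (s - n)) (0\<^sub>m (s - n) n) Bh"
  have "?M \<in> carrier_mat (n + (s - n)) (n + (s - n))" using assms by auto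
  moreover have e: "n + (s - n) = s" using assms by auto
  ultimately have M: "?M \<in> carrier_mat s s" by metis
  have "Lh *\<^sub>v (Ch *\<^sub>v x) = (Lh * Ch) *\<^sub>v x" using assms by (simp add: assoc_mult_mat_vec)
  also have "\<dots> = (?M * Lh) *\<^sub>v x" by (simp only: assms(6))
  also have "\<dots> = ?M *\<^sub>v (Lh *\<^sub>v x)" using M assms by (intro assoc_mult_mat_vec) auto
  also have "Lh *\<^sub>v x = pi_par n (Lh *\<^sub>v x) @\<^sub>v pi_perp s n (Lh *\<^sub>v x)" using assms by (simp add: split_vec)
  also have "?M *\<^sub>v \<dots> = Ah *\<^sub>v pi_par n (Lh *\<^sub>v x) @\<^sub>v Bh *\<^sub>v pi_perp s n (Lh *\<^sub>v x)"
    using assms by (intro mult_mat_vec_split) auto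
  finally show ?thesis .
qed

lemma generic_dsum:
  assumes gh: "generic_scheme sh nh Lh" and gc: "generic_scheme sc nc Lc"
  shows "generic_scheme (sh + sc) (nh + nc) (dsum_mat sh nh Lh sc nc Lc)"
proof -
  let ?L = "dsum_mat sh nh Lh sc nc Lc"
  from gh have h: "1 \<le> nh" "nh < sh" "Lh \<in> carrier_mat sh sh" "det Lh \<noteq> 0"
    "inj_on (pi_par nh) (lattice Lh)" "inj_on (pi_perp sh nh) (lattice Lh)"
    "dense_in_Rm (sh - nh) (pi_perp sh nh ` lattice Lh)" unfolding generic_scheme_def by blast+
  from gc have c: "1 \<le> nc" "nc < sc" "Lc \<in> carrier_mat sc sc" "det Lc \<noteq> 0"
    "inj_on (pi_par nc) (lattice Lc)" "inj_on (pi_perp sc nc) (lattice Lc)"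
    "dense_in_Rm (sc - nc) (pi_perp sc nc ` lattice Lc)" unfolding generic_scheme_def by blast+
  have le: "nh \<le> sh" "nc \<le> sc" using h(2) c(2) by auto
  have Lc: "?L \<in> carrier_mat (sh + sc) (sh + sc)" by (rule dsum_carrier[OF h(3) c(3) le])
  have lat: "lattice ?L = {cmb sh nh sc nc u v | u v. u \<in> lattice Lh \<and> v \<in> lattice Lc}"
    by (rule lattice_dsum[OF h(3) c(3) le])
  have det: "det ?L \<noteq> 0"
  proof
    assume "det ?L = 0"
    then obtain x where x: "x \<in> carrier_vec (sh + sc)" "x \<noteq> 0\<^sub>v (sh + sc)" "?L *\<^sub>v x = 0\<^sub>v (sh + sc)"
      using det_0_iff_vec_prod_zero[OF Lc] by auto
    let ?x1 = "vec_first x sh" and ?x2 = "vec_last x sc"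
    have "cmb sh nh sc nc (Lh *\<^sub>v ?x1) (Lc *\<^sub>v ?x2) = cmb sh nh sc nc (0\<^sub>v sh) (0\<^sub>v sc)"
      using x dsum_mult[OF h(3) c(3) le x(1)] cmb_zero[OF le] by simp
    then have "Lh *\<^sub>v ?x1 = 0\<^sub>v sh \<and> Lc *\<^sub>v ?x2 = 0\<^sub>v sc"
      using h(3) c(3) by (intro cmb_inj[OF le]) auto
    then have "?x1 = 0\<^sub>v sh" "?x2 = 0\<^sub>v sc"
      using det_0_iff_vec_prod_zero[OF h(3)] det_0_iff_vec_prod_zero[OF c(3)] h(4) c(4)
      by (meson vec_first_carrier vec_last_carrier)+
    then have "x = 0\<^sub>v sh @\<^sub>v 0\<^sub>v sc" using vec_first_last_append[OF x(1)] by metis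
    then show False using x(2) zero_app by metis
  qed
  have injpar: "inj_on (pi_par (nh + nc)) (lattice ?L)"
  proof (rule inj_onI)
    fix x y assume "x \<in> lattice ?L" "y \<in> lattice ?L" and e: "pi_par (nh + nc) x = pi_par (nh + nc) y"
    then obtain u v u' v' where uv: "u \<in> lattice Lh" "v \<in> lattice Lc" "x = cmb sh nh sc nc u v"
      "u' \<in> lattice Lh" "v' \<in> lattice Lc" "y = cmb sh nh sc nc u' v'" unfolding lat by auto
    have "pi_par nh u @\<^sub>v pi_par nc v = pi_par nh u' @\<^sub>v pi_par nc v'"
      using e uv by (simp add: cmb_par)
    then have "pi_par nh u = pi_par nh u'" "pi_par nc v = pi_par nc v'"
      by (auto simp: append_vec_eq[OF pi_par_carrier pi_par_carrier])
    then have "u = u'" "v = v'" using h(5) c(5) uv by (auto dest: inj_onD)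
    then show "x = y" using uv by simp
  qed
  have injperp: "inj_on (pi_perp (sh + sc) (nh + nc)) (lattice ?L)"
  proof (rule inj_onI)
    fix x y assume "x \<in> lattice ?L" "y \<in> lattice ?L" and e: "pi_perp (sh + sc) (nh + nc) x = pi_perp (sh + sc) (nh + nc) y"
    then obtain u v u' v' where uv: "u \<in> lattice Lh" "v \<in> lattice Lc" "x = cmb sh nh sc nc u v"
      "u' \<in> lattice Lh" "v' \<in> lattice Lc" "y = cmb sh nh sc nc u' v'" unfolding lat by auto
    have "pi_perp sh nh u @\<^sub>v pi_perp sc nc v = pi_perp sh nh u' @\<^sub>v pi_perp sc nc v'"
      using e uv by (simp add: cmb_perp[OF le])
    then have "pi_perp sh nh u = pi_perp sh nh u'" "pi_perp sc nc v = pi_perp sc nc v'"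
      by (auto simp: append_vec_eq[OF pi_perp_carrier pi_perp_carrier])
    then have "u = u'" "v = v'" using h(6) c(6) uv by (auto dest: inj_onD)
    then show "x = y" using uv by simp
  qed
  have dense: "dense_in_Rm ((sh + sc) - (nh + nc)) (pi_perp (sh + sc) (nh + nc) ` lattice ?L)"
    unfolding dense_in_Rm_def
  proof (intro ballI allI impI)
    fix y :: "real vec" and e :: real
    assume y: "y \<in> carrier_vec ((sh + sc) - (nh + nc))" and e: "e > 0"
    let ?m1 = "sh - nh" and ?m2 = "sc - nc"
    have m: "(sh + sc) - (nh + nc) = ?m1 + ?m2" using le by auto
    obtain x1 where x1: "x1 \<in> pi_perp sh nh ` lattice Lh" "\<forall>i < ?m1. \<bar>x1 $ i - vec_first y ?m1 $ i\<bar> < e"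
      using h(7) e unfolding dense_in_Rm_def by (meson vec_first_carrier)
    obtain x2 where x2: "x2 \<in> pi_perp sc nc ` lattice Lc" "\<forall>i < ?m2. \<bar>x2 $ i - vec_last y ?m2 $ i\<bar> < e"
      using c(7) e unfolding dense_in_Rm_def by (meson vec_last_carrier)
    obtain u where u: "u \<in> lattice Lh" "x1 = pi_perp sh nh u" using x1 by auto
    obtain v where v: "v \<in> lattice Lc" "x2 = pi_perp sc nc v" using x2 by auto
    have mem: "x1 @\<^sub>v x2 \<in> pi_perp (sh + sc) (nh + nc) ` lattice ?L"
    proof (rule image_eqI)
      show "x1 @\<^sub>v x2 = pi_perp (sh + sc) (nh + nc) (cmb sh nh sc nc u v)"
        using u v cmb_perp[OF le] by simp
      show "cmb sh nh sc nc u v \<in> lattice ?L" unfolding lat using u v by blast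
    qed
    have dy: "dim_vec y = ?m1 + ?m2" using y m by auto
    have "\<forall>i < (sh + sc) - (nh + nc). \<bar>(x1 @\<^sub>v x2) $ i - y $ i\<bar> < e"
    proof (intro allI impI)
      fix i assume i: "i < (sh + sc) - (nh + nc)"
      show "\<bar>(x1 @\<^sub>v x2) $ i - y $ i\<bar> < e"
      proof (cases "i < ?m1")
        case True
        have "\<bar>x1 $ i - vec_first y ?m1 $ i\<bar> < e" using x1(2) True by blast
        moreover have "vec_first y ?m1 $ i = y $ i" using True by (simp add: vec_first_def)
        moreover have "(x1 @\<^sub>v x2) $ i = x1 $ i" using True u(2) v(2) by simp
        ultimately show ?thesis by simp
      next
        case False
        then have "i - ?m1 < ?m2" using i m by auto
        then have "\<bar>x2 $ (i - ?m1) - vec_last y ?m2 $ (i - ?m1)\<bar> < e"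
          using x2(2) by blast
        moreover have "vec_last y ?m2 $ (i - ?m1) = y $ (dim_vec y - ?m2 + (i - ?m1))"
          using \<open>i - ?m1 < ?m2\<close> unfolding vec_last_def by (rule index_vec)
        moreover have "dim_vec y - ?m2 + (i - ?m1) = i" using dy False by auto
        moreover have "(x1 @\<^sub>v x2) $ i = x2 $ (i - ?m1)"
        proof -
          have d1: "dim_vec x1 = ?m1" "dim_vec x2 = ?m2" using u(2) v(2) by simp_all
          have di: "i < dim_vec x1 + dim_vec x2" unfolding d1 using i m by linarith
          show ?thesis using index_append_vec(1)[OF di] False unfolding d1 by simp
        qed
        ultimately show ?thesis by metis
      qed
    qed
    then show "\<exists>x \<in> pi_perp (sh + sc) (nh + nc) ` lattice ?L.
        \<forall>i < (sh + sc) - (nh + nc). \<bar>x $ i - y $ i\<bar> < e" using mem by blast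
  qed
  have n1: "1 \<le> nh + nc" "nh + nc < sh + sc" using h(1,2) c(2) by auto
  show ?thesis unfolding generic_scheme_def by (intro conjI n1 Lc det injpar injperp dense)
qed

theorem lemma5:
  fixes sh nh sc nc :: nat and Lh Lc Ah Ac :: "real mat"
  assumes "generic_scheme sh nh Lh" and "generic_scheme sc nc Lc"
    and "self_similarity sh nh Lh Ah" and "self_similarity sc nc Lc Ac"
  shows "generic_scheme (sh + sc) (nh + nc) (dsum_mat sh nh Lh sc nc Lc) \<and>
         self_similarity (sh + sc) (nh + nc) (dsum_mat sh nh Lh sc nc Lc)
           (four_block_mat Ah (0\<^sub>m nh nc) (0\<^sub>m nc nh) Ac)"
proof -
  let ?L = "dsum_mat sh nh Lh sc nc Lc"
  let ?A = "four_block_mat Ah (0\<^sub>m nh nc) (0\<^sub>m nc nh) Ac"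
  have G: "generic_scheme (sh + sc) (nh + nc) ?L" using generic_dsum assms(1,2) by blast
  from assms(1) have h: "nh < sh" "Lh \<in> carrier_mat sh sh" unfolding generic_scheme_def by auto
  from assms(2) have c: "nc < sc" "Lc \<in> carrier_mat sc sc" unfolding generic_scheme_def by auto
  have le: "nh \<le> sh" "nc \<le> sc" using h c by auto
  have lat: "lattice ?L = {cmb sh nh sc nc u v | u v. u \<in> lattice Lh \<and> v \<in> lattice Lc}"
    using lattice_dsum h c le by auto
  from assms(3) obtain Ch Bh where sh: "Ah \<in> carrier_mat nh nh"
    "(\<lambda>x. Ah *\<^sub>v x) ` (pi_par nh ` lattice Lh) \<subseteq> pi_par nh ` lattice Lh"
    "Ch \<in> carrier_mat sh sh" "integer_mat Ch" "Bh \<in> carrier_mat (sh - nh) (sh - nh)"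
    "four_block_mat Ah (0\<^sub>m nh (sh - nh)) (0\<^sub>m (sh - nh) nh) Bh * Lh = Lh * Ch"
    unfolding self_similarity_def by auto
  from assms(4) obtain Cc Bc where sc: "Ac \<in> carrier_mat nc nc"
    "(\<lambda>x. Ac *\<^sub>v x) ` (pi_par nc ` lattice Lc) \<subseteq> pi_par nc ` lattice Lc"
    "Cc \<in> carrier_mat sc sc" "integer_mat Cc" "Bc \<in> carrier_mat (sc - nc) (sc - nc)"
    "four_block_mat Ac (0\<^sub>m nc (sc - nc)) (0\<^sub>m (sc - nc) nc) Bc * Lc = Lc * Cc"
    unfolding self_similarity_def by auto
  have Acar: "?A \<in> carrier_mat (nh + nc) (nh + nc)" using sh sc by auto
  have img: "(\<lambda>x. ?A *\<^sub>v x) ` (pi_par (nh + nc) ` lattice ?L) \<subseteq> pi_par (nh + nc) ` lattice ?L"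
  proof
    fix z assume "z \<in> (\<lambda>x. ?A *\<^sub>v x) ` (pi_par (nh + nc) ` lattice ?L)"
    then obtain u v where uv: "u \<in> lattice Lh" "v \<in> lattice Lc"
      "z = ?A *\<^sub>v pi_par (nh + nc) (cmb sh nh sc nc u v)" unfolding lat by auto
    have "z = Ah *\<^sub>v pi_par nh u @\<^sub>v Ac *\<^sub>v pi_par nc v"
      unfolding uv cmb_par using sh sc by (intro mult_mat_vec_split) auto
    moreover obtain u' where u': "u' \<in> lattice Lh" "Ah *\<^sub>v pi_par nh u = pi_par nh u'"
      using sh(2) uv(1) by blast
    moreover obtain v' where v': "v' \<in> lattice Lc" "Ac *\<^sub>v pi_par nc v = pi_par nc v'"
      using sc(2) uv(2) by blast
    ultimately have "z = pi_par (nh + nc) (cmb sh nh sc nc u' v')" by (simp add: cmb_par)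
    moreover have "cmb sh nh sc nc u' v' \<in> lattice ?L" unfolding lat using u' v' by blast
    ultimately show "z \<in> pi_par (nh + nc) ` lattice ?L" by blast
  qed
  define C where "C = four_block_mat Ch (0\<^sub>m sh sc) (0\<^sub>m sc sh) Cc"
  define B where "B = four_block_mat Bh (0\<^sub>m (sh - nh) (sc - nc)) (0\<^sub>m (sc - nc) (sh - nh)) Bc"
  have m: "(sh - nh) + (sc - nc) = (sh + sc) - (nh + nc)" using le by auto
  have Ccar: "C \<in> carrier_mat (sh + sc) (sh + sc)" unfolding C_def using sh sc by auto
  have Cint: "integer_mat C"
    unfolding integer_mat_def C_def using sh(3,4) sc(3,4) by (auto simp: integer_mat_def)
  have Bcar0: "B \<in> carrier_mat ((sh - nh) + (sc - nc)) ((sh - nh) + (sc - nc))" unfolding B_def using sh sc by auto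
  then have Bcar: "B \<in> carrier_mat ((sh + sc) - (nh + nc)) ((sh + sc) - (nh + nc))" unfolding m .
  let ?M = "four_block_mat ?A (0\<^sub>m (nh + nc) ((sh + sc) - (nh + nc))) (0\<^sub>m ((sh + sc) - (nh + nc)) (nh + nc)) B"
  have Mcar0: "?M \<in> carrier_mat ((nh + nc) + ((sh + sc) - (nh + nc))) ((nh + nc) + ((sh + sc) - (nh + nc)))"
    using Acar Bcar by auto
  have e2: "(nh + nc) + ((sh + sc) - (nh + nc)) = sh + sc" using le by auto
  have Mcar: "?M \<in> carrier_mat (sh + sc) (sh + sc)" using Mcar0 unfolding e2 .
  have Lcar: "?L \<in> carrier_mat (sh + sc) (sh + sc)" using dsum_carrier h c le by auto
  have eq: "?M * ?L = ?L * C"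
  proof (rule mat_eq_vec[of _ "sh + sc" "sh + sc"])
    show "?M * ?L \<in> carrier_mat (sh + sc) (sh + sc)" using Mcar Lcar by auto
    show "?L * C \<in> carrier_mat (sh + sc) (sh + sc)" using Ccar Lcar by auto
    fix x :: "real vec" assume x: "x \<in> carrier_vec (sh + sc)"
    let ?x1 = "vec_first x sh" and ?x2 = "vec_last x sc"
    let ?u = "Lh *\<^sub>v ?x1" and ?v = "Lc *\<^sub>v ?x2"
    have uc: "?u \<in> carrier_vec sh" "?v \<in> carrier_vec sc" using h c by auto
    have "(?M * ?L) *\<^sub>v x = ?M *\<^sub>v (?L *\<^sub>v x)" using Mcar Lcar x by (intro assoc_mult_mat_vec) auto
    also have "?L *\<^sub>v x = cmb sh nh sc nc ?u ?v" using dsum_mult[OF h(2) c(2) le x] .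
    also have "cmb sh nh sc nc ?u ?v = (pi_par nh ?u @\<^sub>v pi_par nc ?v) @\<^sub>v (pi_perp sh nh ?u @\<^sub>v pi_perp sc nc ?v)"
      unfolding cmb_def ..
    also have "?M *\<^sub>v \<dots> = (?A *\<^sub>v (pi_par nh ?u @\<^sub>v pi_par nc ?v)) @\<^sub>v (B *\<^sub>v (pi_perp sh nh ?u @\<^sub>v pi_perp sc nc ?v))"
    proof (rule mult_mat_vec_split[OF Acar Bcar])
      show "pi_par nh ?u @\<^sub>v pi_par nc ?v \<in> carrier_vec (nh + nc)" by auto
      have "pi_perp sh nh ?u @\<^sub>v pi_perp sc nc ?v \<in> carrier_vec ((sh - nh) + (sc - nc))" by auto
      then show "pi_perp sh nh ?u @\<^sub>v pi_perp sc nc ?v \<in> carrier_vec ((sh + sc) - (nh + nc))" unfolding m .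
    qed
    also have "?A *\<^sub>v (pi_par nh ?u @\<^sub>v pi_par nc ?v) = Ah *\<^sub>v pi_par nh ?u @\<^sub>v Ac *\<^sub>v pi_par nc ?v"
      using sh sc by (intro mult_mat_vec_split) auto
    also have "B *\<^sub>v (pi_perp sh nh ?u @\<^sub>v pi_perp sc nc ?v) = Bh *\<^sub>v pi_perp sh nh ?u @\<^sub>v Bc *\<^sub>v pi_perp sc nc ?v"
      unfolding B_def using sh sc by (intro mult_mat_vec_split) auto
    finally have lhs: "(?M * ?L) *\<^sub>v x = (Ah *\<^sub>v pi_par nh ?u @\<^sub>v Ac *\<^sub>v pi_par nc ?v) @\<^sub>v
       (Bh *\<^sub>v pi_perp sh nh ?u @\<^sub>v Bc *\<^sub>v pi_perp sc nc ?v)" .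
    have "(?L * C) *\<^sub>v x = ?L *\<^sub>v (C *\<^sub>v x)" using Ccar Lcar x by (intro assoc_mult_mat_vec) auto
    also have "C *\<^sub>v x = C *\<^sub>v (?x1 @\<^sub>v ?x2)" using x by simp
    also have "\<dots> = Ch *\<^sub>v ?x1 @\<^sub>v Cc *\<^sub>v ?x2" unfolding C_def using sh sc
      by (intro mult_mat_vec_split) auto
    also have "?L *\<^sub>v \<dots> = cmb sh nh sc nc (Lh *\<^sub>v (Ch *\<^sub>v ?x1)) (Lc *\<^sub>v (Cc *\<^sub>v ?x2))"
      using sh sc by (subst dsum_mult[OF h(2) c(2) le]) (auto simp: vec_first_app vec_last_app)
    also have "Lh *\<^sub>v (Ch *\<^sub>v ?x1) = Ah *\<^sub>v pi_par nh ?u @\<^sub>v Bh *\<^sub>v pi_perp sh nh ?u"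
      using sh h le by (intro blk) auto
    also have "Lc *\<^sub>v (Cc *\<^sub>v ?x2) = Ac *\<^sub>v pi_par nc ?v @\<^sub>v Bc *\<^sub>v pi_perp sc nc ?v"
      using sc c le by (intro blk) auto
    also have "cmb sh nh sc nc (Ah *\<^sub>v pi_par nh ?u @\<^sub>v Bh *\<^sub>v pi_perp sh nh ?u)
        (Ac *\<^sub>v pi_par nc ?v @\<^sub>v Bc *\<^sub>v pi_perp sc nc ?v)
      = (Ah *\<^sub>v pi_par nh ?u @\<^sub>v Ac *\<^sub>v pi_par nc ?v) @\<^sub>v
       (Bh *\<^sub>v pi_perp sh nh ?u @\<^sub>v Bc *\<^sub>v pi_perp sc nc ?v)"
      using sh sc le by (intro cmb_app) auto
    finally show "(?M * ?L) *\<^sub>v x = (?L * C) *\<^sub>v x" using lhs by simp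
  qed
  have S: "self_similarity (sh + sc) (nh + nc) ?L ?A"
    unfolding self_similarity_def using G Acar img Ccar Cint Bcar eq by blast
  show ?thesis using G S by blast
qed

end
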